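(* Assume the general-case standing hypotheses, let $\sigma\in(0,1)$, $\mu^+=\sigma\mu$. For $(x,\lambda)\in\mathcal B((x^*,\lambda^* ),\delta)$ with $l<x<u$, $\lambda^l,\lambda^u>0$, let $(\Delta x^N,\Delta\lambda^{l,N},\Delta\lambda^{u,N})$ be the Newton direction, let $d_i=[\nabla^2f(x)]_{ii}+\frac{\lambda_i^l}{x_i-l_i}+\frac{\lambda^u_i}{u_i-x_i}$ and for $i$ with $d_i\neq0$ define $$\Delta x_i^S=-\frac{1}{d_i}\Big([\nabla f(x)]_i-\mu^+\Big[\frac1{x_i-l_i}-\frac1{u_i-x_i}\Big]\Big).$$ Then $\Delta x_i^S-\Delta x_i^N=\frac1{d_i}\sum_{j\ne i}[\nabla^2f(x)]_{ij}\Delta x_j^N$ for each such $i$. Moreover, for every $C_1>0$ there exist $\rho>0$, $\bar\mu\in(0,\hat\mu]$ and constants $0<c\le C$ such that for all $\mu\in(0,\bar\mu]$ and all such $(x,\lambda)$ with $\|(x,\lambda)-(x^\mu,\lambda^\mu)\|<\rho$ and $\|F_\mu(x,\lambda)\|\le C_1\mu$: $0<1/d_i\le C\mu$ for $i\in\mathcal A_x$, $c\le 1/d_i\le C$ for $i\in\mathcal I_x$, and $|\Delta x_i^S-\Delta x_i^N|\le C\mu^2$ for $i\in\mathcal A_x$.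
   Context: General problem: minimize $f(x)$ subject to $l\le x\le u$, $l,u\in\mathbb R^n$, $l<u$, $f$ twice continuously differentiable with locally Lipschitz Hessian; multipliers $\lambda=(\lambda^l,\lambda^u)$. $X=\mathrm{diag}(x)$, $L=\mathrm{diag}(l)$, $U=\mathrm{diag}(u)$, $\Lambda^l=\mathrm{diag}(\lambda^l)$, $\Lambda^u=\mathrm{diag}(\lambda^u)$, $e$ all-ones, Euclidean norms. $F_\mu(x,\lambda)=\begin{bmatrix}\nabla f(x)-\lambda^l+\lambda^u\\ \Lambda^l(X-L)e-\mu e\\ \Lambda^u(U-X)e-\mu e\end{bmatrix}$, $F'(x,\lambda)=\begin{bmatrix}\nabla^2f(x)&-I&I\\ \Lambda^l&X-L&0\\ -\Lambda^u&0&U-X\end{bmatrix}$. Newton direction: solution of $F'(x,\lambda)(\Delta x^N,\Delta\lambda^{l,N},\Delta\lambda^{u,N})=-F_{\mu^+}(x,\lambda)$. Sets: $\mathcal A_l=\{i:x^*_i=l_i\}$, $\mathcal A_u=\{i:x^*_i=u_i\}$, $\mathcal I_l,\mathcal I_u$ their complements, $\mathcal A_x=\mathcal A_l\cup\mathcal A_u$, $\mathcal I_x$ its complement. Standing hypotheses: $\nabla f(x^* )-\lambda^{l*}+\lambda^{u*}=0$, $l\le x^*\le u$, $\lambda^{l*},\lambda^{u*}\ge0$, $(x^*-l)_i\lambda^{l*}_i=0$, $(u-x^* )_i\lambda^{u*}_i=0$, $(x^*-l)+\lambda^{l*}>0$, $(u-x^* )+\lambda^{u*}>0$, $[\nabla^2f(x^*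 )]_{\mathcal I_x\mathcal I_x}\succ0$; $\delta>0$ with $F'$ nonsingular and boundedly invertible on $\mathcal B((x^*,\lambda^* ),\delta)$; $\hat\mu>0$ with a Lipschitz barrier trajectory $(x^\mu,\lambda^\mu)\in\mathcal B((x^*,\lambda^* ),\delta)$, $F_\mu(x^\mu,\lambda^\mu)=0$, $\|(x^\mu,\lambda^\mu)-(x^*,\lambda^* )\|\le C_4\mu$ for $\mu\in(0,\hat\mu]$. *)

theory Defs
  imports "HOL-Analysis.Analysis"
begin

text \<open>Primal-dual points (x, lambda^l, lambda^u) are elements of the product
  real^'n * real^'n * real^'n, whose product norm is the Euclidean norm of the
  stacked vector. g is the gradient of f and H its Hessian.\<close>

definition Fmu ::
  "(real^'n \<Rightarrow> real^'n) \<Rightarrow> real^'n \<Rightarrow> real^'n \<Rightarrow> real \<Rightarrow>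
   real^'n \<Rightarrow> real^'n \<Rightarrow> real^'n \<Rightarrow> (real^'n) \<times> (real^'n) \<times> (real^'n)" where
  "Fmu g l u mu x la lu =
     (g x - la + lu,
      (\<chi> i. la$i * (x$i - l$i) - mu),
      (\<chi> i. lu$i * (u$i - x$i) - mu))"

definition Fprime ::
  "(real^'n \<Rightarrow> real^'n^'n) \<Rightarrow> real^'n \<Rightarrow> real^'n \<Rightarrow>
   real^'n \<Rightarrow> real^'n \<Rightarrow> real^'n \<Rightarrow>
   real^'n \<Rightarrow> real^'n \<Rightarrow> real^'n \<Rightarrow> (real^'n) \<times> (real^'n) \<times> (real^'n)" where
  "Fprime H l u x la lu dx dla dlu =
     (H x *v dx - dla + dlu,
      (\<chi> i. la$i * dx$i + (x$i - l$i) * dla$i),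
      (\<chi> i. - lu$i * dx$i + (u$i - x$i) * dlu$i))"

definition dcoef ::
  "(real^'n \<Rightarrow> real^'n^'n) \<Rightarrow> real^'n \<Rightarrow> real^'n \<Rightarrow>
   real^'n \<Rightarrow> real^'n \<Rightarrow> real^'n \<Rightarrow> 'n \<Rightarrow> real" where
  "dcoef H l u x la lu i =
     H x $ i $ i + la$i / (x$i - l$i) + lu$i / (u$i - x$i)"

definition dxS ::
  "(real^'n \<Rightarrow> real^'n) \<Rightarrow> (real^'n \<Rightarrow> real^'n^'n) \<Rightarrow> real^'n \<Rightarrow> real^'n \<Rightarrow> real \<Rightarrow>
   real^'n \<Rightarrow> real^'n \<Rightarrow> real^'n \<Rightarrow> 'n \<Rightarrow> real" where
  "dxS g H l u mup x la lu i =
     - (1 / dcoef H l u x la lu i) *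
       (g x $ i - mup * (1 / (x$i - l$i) - 1 / (u$i - x$i)))"

end

theory Submission
  imports Defs
begin


lemma part1:
  fixes H :: "real^'n \<Rightarrow> real^'n^'n"
  assumes int: "\<forall>j. l$j < x$j \<and> x$j < u$j \<and> 0 < la$j \<and> 0 < lu$j"
    and eq: "Fprime H l u x la lu dxN dlN duN = - Fmu g l u m x la lu"
    and dnz: "dcoef H l u x la lu i \<noteq> 0"
  shows "dxS g H l u m x la lu i - dxN$i =
            (1 / dcoef H l u x la lu i) * (\<Sum>j\<in>UNIV - {i}. H x $ i $ j * dxN$j)"
proof -
  define a where "a = x$i - l$i"
  define b where "b = u$i - x$i"
  define S where "S = (\<Sum>j\<in>UNIV - {i}. H x $ i $ j * dxN$j)"
  define d where "d = dcoef H l u x la lu i"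
  have a: "a > 0" and b: "b > 0" using int unfolding a_def b_def by (auto simp: algebra_simps)
  have e1: "(H x *v dxN - dlN + duN) $ i = - (g x - la + lu) $ i"
    using eq unfolding Fprime_def Fmu_def by (simp add: prod_eq_iff)
  have e2: "la$i * dxN$i + a * dlN$i = - (la$i * a - m)"
    using eq unfolding Fprime_def Fmu_def a_def by (simp add: prod_eq_iff vec_eq_iff)
  have e3: "- lu$i * dxN$i + b * duN$i = - (lu$i * b - m)"
    using eq unfolding Fprime_def Fmu_def b_def by (simp add: prod_eq_iff vec_eq_iff)
  have mv: "(H x *v dxN) $ i = H x $ i $ i * dxN $ i + S"
    unfolding S_def matrix_vector_mult_def by (simp add: sum.remove)
  have e1': "H x $ i $ i * dxN $ i + S - dlN$i + duN$i = - g x $ i + la$i - lu$i"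
    using e1 mv by simp
  have "a * dlN$i = m - la$i*a - la$i * dxN$i" using e2 by (simp add: algebra_simps)
  hence dla: "dlN$i = (m - la$i*a - la$i * dxN$i) / a" using a by (simp add: eq_divide_eq mult.commute)
  have "b * duN$i = m - lu$i*b + lu$i * dxN$i" using e3 by (simp add: algebra_simps)
  hence dlu: "duN$i = (m - lu$i*b + lu$i * dxN$i) / b" using b by (simp add: eq_divide_eq mult.commute)
  have dd: "d = H x $ i $ i + la$i / a + lu$i / b" unfolding d_def dcoef_def a_def b_def by simp
  have Seq: "S = -(g x $ i - m * (1/a - 1/b)) - d * dxN$i"
    unfolding dd using e1' dla dlu a b apply (simp add: field_simps) by algebra
  have dz: "d \<noteq> 0" using dnz d_def by simp
  show ?thesis
    unfolding dxS_def d_def[symmetric] S_def[symmetric] a_def[symmetric] b_def[symmetric]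
    using Seq dz a b apply (simp add: field_simps) by algebra
qed


lemma act_bound:
  fixes p t h r K mu qh B :: real
  assumes t: "0<t" and pq: "qh \<le> p" and qh: "0 < qh" and pt: "p*t \<le> K*mu" and K: "0<K"
    and mu: "0<mu" and hB: "-B \<le> h" and r: "0 \<le> r" and small: "B*(2*K*mu) \<le> qh^2"
  shows "0 < h + p/t + r" "1/(h + p/t + r) \<le> (2*K/qh^2) * mu"
proof -
  have p: "p > 0" using pq qh by simp
  have "p/t = p^2/(p*t)" using t p by (simp add: power2_eq_square)
  also have "\<dots> \<ge> qh^2/(K*mu)"
  proof -
    have "qh^2 \<le> p^2" using pq qh by (simp add: power_mono)
    moreover have "0 < p*t" using p t by simp
    ultimately show ?thesis using pt K mu
      by (meson frac_le less_le_not_le mult_pos_pos order_trans zero_le_power2 order.refl divide_le_cancel)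
  qed
  finally have pt2: "qh^2/(K*mu) \<le> p/t" .
  have Bb: "B \<le> qh^2/(2*K*mu)" using small K mu by (simp add: le_divide_eq mult.commute)
  have "qh^2/(K*mu) = 2*(qh^2/(2*K*mu))" by simp
  hence low: "qh^2/(2*K*mu) \<le> h + p/t + r" using pt2 Bb hB r by linarith
  have pos: "0 < qh^2/(2*K*mu)" using qh K mu by simp
  show "0 < h + p/t + r" using low pos by linarith
  have "1/(h + p/t + r) \<le> 1/(qh^2/(2*K*mu))" using low pos by (intro frac_le) auto
  also have "\<dots> = (2*K/qh^2) * mu" by simp
  finally show "1/(h + p/t + r) \<le> (2*K/qh^2) * mu" .
qed

lemma inact_bound:
  fixes h hm B p t p' t' qh :: real
  assumes "hm/2 \<le> h" "h \<le> B" "0<hm" "0 \<le> p" "p \<le> qh" "qh \<le> t" "0<qh"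
     "0 \<le> p'" "p' \<le> qh" "qh \<le> t'"
  shows "1/(B+2) \<le> 1/(h+p/t+p'/t')" "1/(h + p/t + p'/t') \<le> 2/hm"
proof -
  have t: "t > 0" "t' > 0" using assms by auto
  have a: "0 \<le> p/t" "p/t \<le> 1" "0 \<le> p'/t'" "p'/t' \<le> 1" using assms t
    by (auto simp: divide_le_eq)
  have l: "hm/2 \<le> h+p/t+p'/t'" "h+p/t+p'/t' \<le> B+2" using a assms(1,2) by linarith+
  have hp: "0 < hm/2" using assms by simp
  have D: "0 < h+p/t+p'/t'" using l(1) hp by linarith
  show "1/(B+2) \<le> 1/(h+p/t+p'/t')" using l D by (intro frac_le) auto
  have "1/(h + p/t + p'/t') \<le> 1/(hm/2)" using l hp D by (intro frac_le) auto
  thus "1/(h + p/t + p'/t') \<le> 2/hm" by simp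
qed



lemma axis_quad:
  fixes A :: "real^'n^'n"
  shows "axis i 1 \<bullet> (A *v axis i 1) = A $ i $ i"
proof -
  have "(A *v axis i 1) $ i = A$i$i"
    by (simp add: matrix_vector_mult_def axis_def if_distrib cong: if_cong)
  thus ?thesis by (simp add: inner_axis')
qed

lemma Hent_le: fixes A :: "real^'n^'n" and i :: 'n shows "\<bar>A $ i $ j\<bar> \<le> norm A"
  by (meson component_le_norm_cart Finite_Cartesian_Product.norm_nth_le order_trans)

lemma finmin:
  fixes q :: "'n::finite \<Rightarrow> real"
  assumes "\<forall>i. 0 < q i"
  shows "0 < Min (range q)" "\<forall>i. Min (range q) \<le> q i"
  using assms by (auto)



lemma part2:
  fixes g :: "real^'n \<Rightarrow> real^'n"
    and H :: "real^'n \<Rightarrow> real^'n^'n"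
    and l u xs las lus :: "real^'n"
    and traj :: "real \<Rightarrow> (real^'n) \<times> (real^'n) \<times> (real^'n)"
    and \<delta> muhat C4 \<sigma> C1 :: real
  assumes lu: "\<forall>i. l$i < u$i"
    and hess_cont: "continuous_on UNIV H"
    and feas: "\<forall>i. l$i \<le> xs$i \<and> xs$i \<le> u$i"
    and mult_nonneg: "\<forall>i. 0 \<le> las$i \<and> 0 \<le> lus$i"
    and compl: "\<forall>i. (xs$i - l$i) * las$i = 0 \<and> (u$i - xs$i) * lus$i = 0"
    and strict: "\<forall>i. (xs$i - l$i) + las$i > 0 \<and> (u$i - xs$i) + lus$i > 0"
    and sosc: "\<forall>v. v \<noteq> 0 \<and> (\<forall>i. (xs$i = l$i \<or> xs$i = u$i) \<longrightarrow> v$i = 0)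
                 \<longrightarrow> v \<bullet> (H xs *v v) > 0"
    and Fp_inv: "\<exists>M. \<forall>x la lu. (x, la, lu) \<in> ball (xs, las, lus) \<delta> \<longrightarrow>
                   (\<forall>dx dla dlu. norm (dx, dla, dlu) \<le> M * norm (Fprime H l u x la lu dx dla dlu))"
    and muhat_pos: "muhat > 0"
    and traj_bound: "\<forall>mu\<in>{0<..muhat}. norm (traj mu - (xs, las, lus)) \<le> C4 * mu"
    and sigma: "0 < \<sigma>" "\<sigma> < 1"
    and C1: "C1 > 0"
  shows "\<exists>\<rho>>0. \<exists>mubar. 0 < mubar \<and> mubar \<le> muhat \<and> (\<exists>c C. 0 < c \<and> c \<le> C \<and>
        (\<forall>mu x la lu.
           0 < mu \<and> mu \<le> mubar \<and>
           (x, la, lu) \<in> ball (xs, las, lus) \<delta> \<and>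
           (\<forall>j. l$j < x$j \<and> x$j < u$j \<and> 0 < la$j \<and> 0 < lu$j) \<and>
           norm ((x, la, lu) - traj mu) < \<rho> \<and>
           norm (Fmu g l u mu x la lu) \<le> C1 * mu
           \<longrightarrow>
           (\<forall>i. (xs$i = l$i \<or> xs$i = u$i) \<longrightarrow>
                 0 < 1 / dcoef H l u x la lu i \<and> 1 / dcoef H l u x la lu i \<le> C * mu) \<and>
           (\<forall>i. \<not> (xs$i = l$i \<or> xs$i = u$i) \<longrightarrow>
                 c \<le> 1 / dcoef H l u x la lu i \<and> 1 / dcoef H l u x la lu i \<le> C) \<and>
           (\<forall>dxN dlN duN. Fprime H l u x la lu dxN dlN duN = - Fmu g l u (\<sigma> * mu) x la lu \<longrightarrow>
              (\<forall>i. (xs$i = l$i \<or> xs$i = u$i) \<longrightarrow>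
                 \<bar>dxS g H l u (\<sigma> * mu) x la lu i - dxN$i\<bar> \<le> C * mu\<^sup>2))))"
proof -
  obtain M where M: "\<forall>x la lu. (x, la, lu) \<in> ball (xs, las, lus) \<delta> \<longrightarrow>
                   (\<forall>dx dla dlu. norm (dx, dla, dlu) \<le> M * norm (Fprime H l u x la lu dx dla dlu))"
    using Fp_inv by blast
  define M' where "M' = max M 1"
  have M'pos: "M' > 0" unfolding M'_def by simp
  define q where "q i = min (min ((xs$i-l$i)+las$i) ((u$i-xs$i)+lus$i)) (u$i - l$i)" for i
  have qpos: "\<forall>i. 0 < q i" using strict lu by (auto simp: q_def)
  define qm where "qm = Min (range q)"
  have qm: "0 < qm" "\<forall>i. qm \<le> q i" using finmin[OF qpos] unfolding qm_def by auto
  define hd where "hd i = (if xs$i = l$i \<or> xs$i = u$i then 1 else H xs $ i $ i)" for i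
  have hdpos: "\<forall>i. 0 < hd i"
  proof
    fix i
    show "0 < hd i"
    proof (cases "xs$i = l$i \<or> xs$i = u$i")
      case True thus ?thesis by (simp add: hd_def)
    next
      case False
      have "axis i (1::real) \<noteq> 0" by simp
      moreover have "\<forall>k. (xs$k = l$k \<or> xs$k = u$k) \<longrightarrow> axis i (1::real) $ k = 0"
        using False by (auto simp: axis_def)
      ultimately have "axis i 1 \<bullet> (H xs *v axis i 1) > 0" using sosc by blast
      thus ?thesis using False by (simp add: hd_def axis_quad)
    qed
  qed
  define hm where "hm = Min (range hd)"
  have hm: "0 < hm" "\<forall>i. hm \<le> hd i" using finmin[OF hdpos] unfolding hm_def by auto
  define B where "B = norm (H xs) + 1"
  have Bpos: "B > 0" unfolding B_def by (simp add: add_nonneg_pos)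
  define e where "e = min 1 (hm/2)"
  have epos: "e > 0" using hm by (simp add: e_def)
  obtain \<eta> where eta: "\<eta> > 0" "\<forall>x'. dist x' xs < \<eta> \<longrightarrow> dist (H x') (H xs) < e"
  proof -
    have "\<forall>\<epsilon>>0. \<exists>\<delta>>0. \<forall>x'\<in>UNIV. dist x' xs < \<delta> \<longrightarrow> dist (H x') (H xs) < \<epsilon>"
      using hess_cont unfolding continuous_on_iff by blast
    hence "\<exists>\<delta>>0. \<forall>x'. dist x' xs < \<delta> \<longrightarrow> dist (H x') (H xs) < e" using epos by simp
    thus ?thesis using that by blast
  qed
  define \<epsilon> where "\<epsilon> = min (qm/2) \<eta>"
  have epspos: "\<epsilon> > 0" using qm eta by (simp add: \<epsilon>_def)
  define K where "K = C1 + 1"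
  have Kpos: "K > 0" using C1 by (simp add: K_def)
  define qh where "qh = qm/2"
  have qhpos: "qh > 0" using qm by (simp add: qh_def)
  define A1 where "A1 = 2*K/qh^2"
  have A1pos: "A1 > 0" using Kpos qhpos by (simp add: A1_def)
  define N where "N = real CARD('n)"
  have Npos: "N > 0" by (simp add: N_def)
  define A3 where "A3 = A1 * (N * B * (M' * (C1 + 2*N)))"
  define c where "c = 1/(B+2)"
  define C where "C = max (max A1 (2/hm)) (max A3 c)"
  have cpos: "c > 0" using Bpos by (simp add: c_def)
  define \<rho> where "\<rho> = \<epsilon>/2"
  define mubar where "mubar = min muhat (min (\<epsilon>/(2*(\<bar>C4\<bar>+1))) (qh^2/(B*(2*K))))"
  have mubarpos: "mubar > 0" using muhat_pos epspos qhpos Bpos Kpos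
    by (simp add: mubar_def add_pos_nonneg)
  show ?thesis
  proof (intro exI conjI)
    show "\<rho> > 0" using epspos by (simp add: \<rho>_def)
    show "0 < mubar" by fact
    show "mubar \<le> muhat" by (simp add: mubar_def)
    show "0 < c" by fact
    show "c \<le> C" by (simp add: C_def)
    show "\<forall>mu x la lu.
           0 < mu \<and> mu \<le> mubar \<and>
           (x, la, lu) \<in> ball (xs, las, lus) \<delta> \<and>
           (\<forall>j. l$j < x$j \<and> x$j < u$j \<and> 0 < la$j \<and> 0 < lu$j) \<and>
           norm ((x, la, lu) - traj mu) < \<rho> \<and>
           norm (Fmu g l u mu x la lu) \<le> C1 * mu
           \<longrightarrow>
           (\<forall>i. (xs$i = l$i \<or> xs$i = u$i) \<longrightarrow>
                 0 < 1 / dcoef H l u x la lu i \<and> 1 / dcoef H l u x la lu i \<le> C * mu) \<and>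
           (\<forall>i. \<not> (xs$i = l$i \<or> xs$i = u$i) \<longrightarrow>
                 c \<le> 1 / dcoef H l u x la lu i \<and> 1 / dcoef H l u x la lu i \<le> C) \<and>
           (\<forall>dxN dlN duN. Fprime H l u x la lu dxN dlN duN = - Fmu g l u (\<sigma> * mu) x la lu \<longrightarrow>
              (\<forall>i. (xs$i = l$i \<or> xs$i = u$i) \<longrightarrow>
                 \<bar>dxS g H l u (\<sigma> * mu) x la lu i - dxN$i\<bar> \<le> C * mu\<^sup>2))"
    proof (intro allI impI)
    fix mu x la lu
    assume hyp: "0 < mu \<and> mu \<le> mubar \<and>
           (x, la, lu) \<in> ball (xs, las, lus) \<delta> \<and>
           (\<forall>j. l$j < x$j \<and> x$j < u$j \<and> 0 < la$j \<and> 0 < lu$j) \<and>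
           norm ((x, la, lu) - traj mu) < \<rho> \<and>
           norm (Fmu g l u mu x la lu) \<le> C1 * mu"
    have mu: "0 < mu" "mu \<le> mubar" and inball: "(x, la, lu) \<in> ball (xs, las, lus) \<delta>"
      and int: "\<forall>j. l$j < x$j \<and> x$j < u$j \<and> 0 < la$j \<and> 0 < lu$j"
      and near: "norm ((x, la, lu) - traj mu) < \<rho>"
      and Fb: "norm (Fmu g l u mu x la lu) \<le> C1 * mu" using hyp by auto
    have mu_muhat: "mu \<in> {0<..muhat}" using mu by (simp add: mubar_def)
    have tb: "norm (traj mu - (xs, las, lus)) \<le> C4 * mu" using traj_bound mu_muhat by blast
    have mu1: "mu \<le> \<epsilon>/(2*(\<bar>C4\<bar>+1))" using mu by (simp add: mubar_def)
    hence "mu * (2*(\<bar>C4\<bar>+1)) \<le> \<epsilon>" by (simp add: le_divide_eq add_pos_nonneg)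
    hence m2: "2*(\<bar>C4\<bar>*mu) + 2*mu \<le> \<epsilon>" by (simp add: algebra_simps)
    have "C4*mu \<le> \<bar>C4\<bar>*mu" using mu by (intro mult_right_mono) auto
    hence tb2: "norm (traj mu - (xs, las, lus)) \<le> \<epsilon>/2" using tb m2 mu by linarith
    have "(x, la, lu) - (xs, las, lus) = ((x, la, lu) - traj mu) + (traj mu - (xs, las, lus))"
      by simp
    hence "norm ((x, la, lu) - (xs, las, lus)) \<le> norm ((x, la, lu) - traj mu) + norm (traj mu - (xs, las, lus))"
      using norm_triangle_ineq[of "(x, la, lu) - traj mu" "traj mu - (xs, las, lus)"] by simp
    hence clo: "norm ((x - xs, la - las, lu - lus)) < \<epsilon>" using near tb2 by (simp add: \<rho>_def)
    have cx: "norm (x - xs) < \<epsilon>" using clo norm_fst_le[of "x-xs" "(la-las,lu-lus)"] by linarith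
    have "norm (la - las) \<le> norm ((x - xs, la - las, lu - lus))"
      using norm_fst_le[of "la-las" "lu-lus"] norm_snd_le[of "(la-las,lu-lus)" "x-xs"] by linarith
    hence nla: "norm (la - las) < \<epsilon>" using clo by linarith
    have cla: "\<forall>i. \<bar>la$i - las$i\<bar> < \<epsilon>"
    proof
      fix i
      have "\<bar>(la - las)$i\<bar> \<le> norm (la - las)" by (rule component_le_norm_cart)
      thus "\<bar>la$i - las$i\<bar> < \<epsilon>" using nla by simp
    qed
    have "norm (lu - lus) \<le> norm ((x - xs, la - las, lu - lus))"
      using norm_snd_le[of "lu-lus" "la-las"] norm_snd_le[of "(la-las,lu-lus)" "x-xs"] by linarith
    hence nlu: "norm (lu - lus) < \<epsilon>" using clo by linarith
    have clu: "\<forall>i. \<bar>lu$i - lus$i\<bar> < \<epsilon>"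
    proof
      fix i
      have "\<bar>(lu - lus)$i\<bar> \<le> norm (lu - lus)" by (rule component_le_norm_cart)
      thus "\<bar>lu$i - lus$i\<bar> < \<epsilon>" using nlu by simp
    qed
    have cxi: "\<forall>i. \<bar>x$i - xs$i\<bar> < \<epsilon>"
    proof
      fix i
      have "\<bar>(x - xs)$i\<bar> \<le> norm (x - xs)" by (rule component_le_norm_cart)
      thus "\<bar>x$i - xs$i\<bar> < \<epsilon>" using cx by simp
    qed
    have "dist x xs < \<eta>" using cx by (simp add: dist_norm \<epsilon>_def)
    hence dH: "norm (H x - H xs) < e" using eta by (simp add: dist_norm)
    have Hc: "\<forall>i j. \<bar>H x $ i $ j - H xs $ i $ j\<bar> < e"
    proof (intro allI)
      fix i j
      have "\<bar>(H x - H xs) $ i $ j\<bar> \<le> norm (H x - H xs)" by (rule Hent_le)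
      thus "\<bar>H x $ i $ j - H xs $ i $ j\<bar> < e" using dH by simp
    qed
    have Hb: "\<forall>i j. \<bar>H x $ i $ j\<bar> \<le> B"
    proof (intro allI)
      fix i j
      have "\<bar>H xs $ i $ j\<bar> \<le> norm (H xs)" by (rule Hent_le)
      moreover have "e \<le> 1" by (simp add: e_def)
      ultimately show "\<bar>H x $ i $ j\<bar> \<le> B" using Hc[rule_format, of i j] unfolding B_def by linarith
    qed
    have Fl: "\<forall>i. \<bar>la$i*(x$i-l$i) - mu\<bar> \<le> C1*mu"
    proof
      fix i
      have "\<bar>la$i*(x$i-l$i) - mu\<bar> \<le> norm (\<chi> i. la$i*(x$i-l$i) - mu)"
        using component_le_norm_cart[of "\<chi> i. la$i*(x$i-l$i) - mu" i] by simp
      also have "\<dots> \<le> norm (Fmu g l u mu x la lu)" unfolding Fmu_def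
        by (rule order_trans[OF norm_fst_le norm_snd_le])
      finally show "\<bar>la$i*(x$i-l$i) - mu\<bar> \<le> C1*mu" using Fb by linarith
    qed
    have Fu: "\<forall>i. \<bar>lu$i*(u$i-x$i) - mu\<bar> \<le> C1*mu"
    proof
      fix i
      have "\<bar>lu$i*(u$i-x$i) - mu\<bar> \<le> norm (\<chi> i. lu$i*(u$i-x$i) - mu)"
        using component_le_norm_cart[of "\<chi> i. lu$i*(u$i-x$i) - mu" i] by simp
      also have "\<dots> \<le> norm (Fmu g l u mu x la lu)" unfolding Fmu_def
        by (rule order_trans[OF norm_snd_le norm_snd_le])
      finally show "\<bar>lu$i*(u$i-x$i) - mu\<bar> \<le> C1*mu" using Fb by linarith
    qed
    have small: "B*(2*K*mu) \<le> qh^2"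
    proof -
      have "mu \<le> qh^2/(B*(2*K))" using mu by (simp add: mubar_def)
      thus ?thesis using Bpos Kpos by (simp add: le_divide_eq mult.commute mult.left_commute)
    qed
    have eps_q: "\<epsilon> \<le> qh" by (simp add: \<epsilon>_def qh_def)
    have act: "0 < dcoef H l u x la lu i \<and> 1 / dcoef H l u x la lu i \<le> A1 * mu"
      if ai: "xs$i = l$i \<or> xs$i = u$i" for i
    proof (cases "xs$i = l$i")
      case True
      have "q i \<le> (xs$i - l$i) + las$i" by (simp add: q_def)
      hence "qm \<le> las$i" using qm(2)[rule_format, of i] True by simp
      moreover have "\<bar>la$i - las$i\<bar> < \<epsilon>" using cla by blast
      ultimately have p: "qh \<le> la$i" using eps_q unfolding qh_def by arith
      have t: "0 < x$i - l$i" using int by simp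
      have "\<bar>la$i*(x$i-l$i) - mu\<bar> \<le> C1*mu" using Fl by blast
      hence pt: "la$i * (x$i - l$i) \<le> K * mu" unfolding K_def by (simp add: algebra_simps abs_le_iff)
      have "\<bar>H x $ i $ i\<bar> \<le> B" using Hb by blast
      hence h: "- B \<le> H x $ i $ i" by arith
      have r: "0 \<le> lu$i / (u$i - x$i)" using int[rule_format, of i] by simp
      have "dcoef H l u x la lu i = H x $ i $ i + la$i/(x$i - l$i) + lu$i / (u$i - x$i)"
        by (simp add: dcoef_def)
      thus ?thesis using act_bound[OF t p qhpos pt Kpos mu(1) h r small] by (simp add: A1_def)
    next
      case False
      hence U: "xs$i = u$i" using ai by simp
      have "q i \<le> (u$i - xs$i) + lus$i" by (simp add: q_def)
      hence "qm \<le> lus$i" using qm(2)[rule_format, of i] U by simp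
      moreover have "\<bar>lu$i - lus$i\<bar> < \<epsilon>" using clu by blast
      ultimately have p: "qh \<le> lu$i" using eps_q unfolding qh_def by arith
      have t: "0 < u$i - x$i" using int by simp
      have "\<bar>lu$i*(u$i-x$i) - mu\<bar> \<le> C1*mu" using Fu by blast
      hence pt: "lu$i * (u$i - x$i) \<le> K * mu" unfolding K_def by (simp add: algebra_simps abs_le_iff)
      have "\<bar>H x $ i $ i\<bar> \<le> B" using Hb by blast
      hence h: "- B \<le> H x $ i $ i" by arith
      have r: "0 \<le> la$i / (x$i - l$i)" using int[rule_format, of i] by simp
      have "dcoef H l u x la lu i = H x $ i $ i + lu$i/(u$i - x$i) + la$i / (x$i - l$i)"
        by (simp add: dcoef_def)
      thus ?thesis using act_bound[OF t p qhpos pt Kpos mu(1) h r small] by (simp add: A1_def)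
    qed
    have R1: "0 < 1 / dcoef H l u x la lu i \<and> 1 / dcoef H l u x la lu i \<le> C * mu"
      if "xs$i = l$i \<or> xs$i = u$i" for i
    proof -
      have "A1 * mu \<le> C * mu" using mu by (intro mult_right_mono) (auto simp: C_def)
      thus ?thesis using act[OF that] by simp
    qed
    have R2: "c \<le> 1 / dcoef H l u x la lu i \<and> 1 / dcoef H l u x la lu i \<le> C"
      if ni: "\<not> (xs$i = l$i \<or> xs$i = u$i)" for i
    proof -
      have gl: "xs$i - l$i > 0" and gu: "u$i - xs$i > 0" using ni feas[rule_format, of i]
        by auto
      have las0: "las$i = 0" and lus0: "lus$i = 0" using compl[rule_format, of i] gl gu by auto
      have "q i \<le> (xs$i - l$i) + las$i" "q i \<le> (u$i - xs$i) + lus$i" by (simp_all add: q_def)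
      hence qq: "qm \<le> xs$i - l$i" "qm \<le> u$i - xs$i" using qm(2)[rule_format, of i] las0 lus0 by simp_all
      have cx1: "\<bar>x$i - xs$i\<bar> < \<epsilon>" using cxi by blast
      have t: "qh \<le> x$i - l$i" using qq cx1 eps_q unfolding qh_def by arith
      have t': "qh \<le> u$i - x$i" using qq cx1 eps_q unfolding qh_def by arith
      have "\<bar>la$i - las$i\<bar> < \<epsilon>" "\<bar>lu$i - lus$i\<bar> < \<epsilon>" using cla clu by blast+
      hence p: "la$i \<le> qh" and p': "lu$i \<le> qh" using las0 lus0 eps_q by arith+
      have p0: "0 \<le> la$i" "0 \<le> lu$i" using int by (simp add: less_imp_le)+
      have "hm \<le> H xs $ i $ i" using hm(2)[rule_format, of i] ni unfolding hd_def by simp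
      moreover have "e \<le> hm/2" by (simp add: e_def)
      moreover have "\<bar>H x $ i $ i - H xs $ i $ i\<bar> < e" using Hc by blast
      ultimately have h: "hm/2 \<le> H x $ i $ i" by arith
      have "\<bar>H x $ i $ i\<bar> \<le> B" using Hb by blast
      hence hB: "H x $ i $ i \<le> B" by arith
      note ib = inact_bound[OF h hB hm(1) p0(1) p t qhpos p0(2) p' t']
      have "dcoef H l u x la lu i = H x $ i $ i + la$i/(x$i - l$i) + lu$i / (u$i - x$i)"
        by (simp add: dcoef_def)
      thus ?thesis using ib by (simp add: c_def C_def)
    qed
    have R3: "\<bar>dxS g H l u (\<sigma> * mu) x la lu i - dxN$i\<bar> \<le> C * mu\<^sup>2"
      if eqN: "Fprime H l u x la lu dxN dlN duN = - Fmu g l u (\<sigma> * mu) x la lu"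
      and ai: "xs$i = l$i \<or> xs$i = u$i" for dxN dlN duN i
    proof -
      define d where "d = dcoef H l u x la lu i"
      define S where "S = (\<Sum>j\<in>UNIV - {i}. H x $ i $ j * dxN$j)"
      have d: "0 < d" "1/d \<le> A1 * mu" using act[OF ai] by (simp_all add: d_def)
      have p1: "dxS g H l u (\<sigma> * mu) x la lu i - dxN$i = (1/d) * S"
        unfolding d_def S_def using part1[OF int eqN] d(1) d_def by simp
      have "norm dxN \<le> norm (dxN, dlN, duN)" by (rule norm_fst_le)
      also have "\<dots> \<le> M * norm (Fprime H l u x la lu dxN dlN duN)" using M inball by blast
      also have "\<dots> \<le> M' * norm (Fprime H l u x la lu dxN dlN duN)"
        by (intro mult_right_mono) (auto simp: M'_def)
      also have "norm (Fprime H l u x la lu dxN dlN duN) = norm (Fmu g l u (\<sigma> * mu) x la lu)"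
        using eqN by simp
      finally have nd1: "norm dxN \<le> M' * norm (Fmu g l u (\<sigma> * mu) x la lu)" .
      define v :: "real^'n" where "v = (\<chi> i. (1-\<sigma>)*mu)"
      have Fs: "Fmu g l u (\<sigma> * mu) x la lu = Fmu g l u mu x la lu + (0, v, v)"
        unfolding Fmu_def v_def by (simp add: vec_eq_iff algebra_simps)
      have nv: "norm v \<le> N * mu"
      proof -
        have "norm v \<le> (\<Sum>i\<in>UNIV. \<bar>v$i\<bar>)" by (rule norm_le_l1_cart)
        also have "\<dots> = N * ((1-\<sigma>)*mu)" using sigma mu by (simp add: v_def N_def)
        also have "\<dots> \<le> N * mu" using sigma mu Npos by (intro mult_left_mono) auto
        finally show ?thesis .
      qed
      have "norm ((0::real^'n), v, v) \<le> norm (0::real^'n) + norm (v, v)" by (rule norm_Pair_le)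
      also have "\<dots> \<le> norm v + norm v" using norm_Pair_le[of v v] by simp
      finally have n0: "norm ((0::real^'n), v, v) \<le> 2 * (N * mu)" using nv by linarith
      have "norm (Fmu g l u (\<sigma> * mu) x la lu) \<le> norm (Fmu g l u mu x la lu) + norm ((0::real^'n), v, v)"
        unfolding Fs by (rule norm_triangle_ineq)
      hence nF: "norm (Fmu g l u (\<sigma> * mu) x la lu) \<le> (C1 + 2*N) * mu" using Fb n0
        by (simp add: algebra_simps)
      have "M' * norm (Fmu g l u (\<sigma> * mu) x la lu) \<le> M' * ((C1 + 2*N) * mu)"
        using nF M'pos by (intro mult_left_mono) auto
      hence nd: "norm dxN \<le> M' * ((C1 + 2*N) * mu)" using nd1 by linarith
      have "\<bar>S\<bar> \<le> (\<Sum>j\<in>UNIV - {i}. \<bar>H x $ i $ j * dxN$j\<bar>)" unfolding S_def by (rule sum_abs)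
      also have "\<dots> \<le> (\<Sum>j\<in>UNIV - {i}. B * norm dxN)"
      proof (rule sum_mono)
        fix j
        have "\<bar>H x $ i $ j\<bar> \<le> B" using Hb by blast
        moreover have "\<bar>dxN$j\<bar> \<le> norm dxN" by (rule component_le_norm_cart)
        ultimately show "\<bar>H x $ i $ j * dxN$j\<bar> \<le> B * norm dxN"
          unfolding abs_mult using Bpos by (intro mult_mono) auto
      qed
      also have "\<dots> \<le> (\<Sum>j\<in>(UNIV::'n set). B * norm dxN)"
        using sum_mono2[of UNIV "UNIV - {i}" "\<lambda>j. B * norm dxN"] Bpos by simp
      also have "\<dots> = N * B * norm dxN" by (simp add: N_def)
      finally have Sb: "\<bar>S\<bar> \<le> N * B * norm dxN" .
      have "N * B * norm dxN \<le> N * B * (M' * ((C1 + 2*N) * mu))"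
        using nd Npos Bpos by (intro mult_left_mono) auto
      hence Sb2: "\<bar>S\<bar> \<le> N * B * (M' * ((C1 + 2*N) * mu))" using Sb by linarith
      have "\<bar>dxS g H l u (\<sigma> * mu) x la lu i - dxN$i\<bar> = (1/d) * \<bar>S\<bar>"
        using p1 d(1) by (simp add: abs_mult)
      also have "\<dots> \<le> (A1 * mu) * (N * B * (M' * ((C1 + 2*N) * mu)))"
        using d Sb2 A1pos mu(1) by (intro mult_mono) auto
      also have "\<dots> = A3 * mu\<^sup>2" by (simp add: A3_def power2_eq_square algebra_simps)
      also have "\<dots> \<le> C * mu\<^sup>2" by (intro mult_right_mono) (auto simp: C_def)
      finally show ?thesis .
    qed
    show "(\<forall>i. (xs$i = l$i \<or> xs$i = u$i) \<longrightarrow>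
                 0 < 1 / dcoef H l u x la lu i \<and> 1 / dcoef H l u x la lu i \<le> C * mu) \<and>
           (\<forall>i. \<not> (xs$i = l$i \<or> xs$i = u$i) \<longrightarrow>
                 c \<le> 1 / dcoef H l u x la lu i \<and> 1 / dcoef H l u x la lu i \<le> C) \<and>
           (\<forall>dxN dlN duN. Fprime H l u x la lu dxN dlN duN = - Fmu g l u (\<sigma> * mu) x la lu \<longrightarrow>
              (\<forall>i. (xs$i = l$i \<or> xs$i = u$i) \<longrightarrow>
                 \<bar>dxS g H l u (\<sigma> * mu) x la lu i - dxN$i\<bar> \<le> C * mu\<^sup>2))"
      using R1 R2 R3 by blast
    qed
  qed
qed


theorem mainTheorem8:
  fixes f :: "real^'n \<Rightarrow> real"
    and g :: "real^'n \<Rightarrow> real^'n"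
    and H :: "real^'n \<Rightarrow> real^'n^'n"
    and l u xs las lus :: "real^'n"
    and traj :: "real \<Rightarrow> (real^'n) \<times> (real^'n) \<times> (real^'n)"
    and \<delta> muhat C4 \<sigma> :: real
  assumes lu: "\<forall>i. l$i < u$i"
    and grad: "\<forall>x. (f has_derivative (\<lambda>h. g x \<bullet> h)) (at x)"
    and hess: "\<forall>x. (g has_derivative (\<lambda>h. H x *v h)) (at x)"
    and hess_cont: "continuous_on UNIV H"
    and hess_lip: "\<forall>x. \<exists>r>0. \<exists>L. L-lipschitz_on (ball x r) H"
    and kkt1: "g xs - las + lus = 0"
    and feas: "\<forall>i. l$i \<le> xs$i \<and> xs$i \<le> u$i"
    and mult_nonneg: "\<forall>i. 0 \<le> las$i \<and> 0 \<le> lus$i"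
    and compl: "\<forall>i. (xs$i - l$i) * las$i = 0 \<and> (u$i - xs$i) * lus$i = 0"
    and strict: "\<forall>i. (xs$i - l$i) + las$i > 0 \<and> (u$i - xs$i) + lus$i > 0"
    and sosc: "\<forall>v. v \<noteq> 0 \<and> (\<forall>i. (xs$i = l$i \<or> xs$i = u$i) \<longrightarrow> v$i = 0)
                 \<longrightarrow> v \<bullet> (H xs *v v) > 0"
    and delta_pos: "\<delta> > 0"
    and Fp_inv: "\<exists>M. \<forall>x la lu. (x, la, lu) \<in> ball (xs, las, lus) \<delta> \<longrightarrow>
                   (\<forall>dx dla dlu. norm (dx, dla, dlu) \<le> M * norm (Fprime H l u x la lu dx dla dlu))"
    and muhat_pos: "muhat > 0"
    and traj_lip: "\<exists>K. K-lipschitz_on {0<..muhat} traj"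
    and traj_ball: "\<forall>mu\<in>{0<..muhat}. traj mu \<in> ball (xs, las, lus) \<delta>"
    and traj_F: "\<forall>mu\<in>{0<..muhat}.
                   Fmu g l u mu (fst (traj mu)) (fst (snd (traj mu))) (snd (snd (traj mu))) = 0"
    and traj_bound: "\<forall>mu\<in>{0<..muhat}. norm (traj mu - (xs, las, lus)) \<le> C4 * mu"
    and sigma: "0 < \<sigma>" "\<sigma> < 1"
  shows
    "(\<forall>mu x la lu dxN dlN duN i.
        (x, la, lu) \<in> ball (xs, las, lus) \<delta> \<and>
        (\<forall>j. l$j < x$j \<and> x$j < u$j \<and> 0 < la$j \<and> 0 < lu$j) \<and>
        Fprime H l u x la lu dxN dlN duN = - Fmu g l u (\<sigma> * mu) x la lu \<and>
        dcoef H l u x la lu i \<noteq> 0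
        \<longrightarrow> dxS g H l u (\<sigma> * mu) x la lu i - dxN$i =
            (1 / dcoef H l u x la lu i) * (\<Sum>j\<in>UNIV - {i}. H x $ i $ j * dxN$j))
     \<and>
     (\<forall>C1>0. \<exists>\<rho>>0. \<exists>mubar. 0 < mubar \<and> mubar \<le> muhat \<and> (\<exists>c C. 0 < c \<and> c \<le> C \<and>
        (\<forall>mu x la lu.
           0 < mu \<and> mu \<le> mubar \<and>
           (x, la, lu) \<in> ball (xs, las, lus) \<delta> \<and>
           (\<forall>j. l$j < x$j \<and> x$j < u$j \<and> 0 < la$j \<and> 0 < lu$j) \<and>
           norm ((x, la, lu) - traj mu) < \<rho> \<and>
           norm (Fmu g l u mu x la lu) \<le> C1 * mu
           \<longrightarrow>
           (\<forall>i. (xs$i = l$i \<or> xs$i = u$i) \<longrightarrow>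
                 0 < 1 / dcoef H l u x la lu i \<and> 1 / dcoef H l u x la lu i \<le> C * mu) \<and>
           (\<forall>i. \<not> (xs$i = l$i \<or> xs$i = u$i) \<longrightarrow>
                 c \<le> 1 / dcoef H l u x la lu i \<and> 1 / dcoef H l u x la lu i \<le> C) \<and>
           (\<forall>dxN dlN duN. Fprime H l u x la lu dxN dlN duN = - Fmu g l u (\<sigma> * mu) x la lu \<longrightarrow>
              (\<forall>i. (xs$i = l$i \<or> xs$i = u$i) \<longrightarrow>
                 \<bar>dxS g H l u (\<sigma> * mu) x la lu i - dxN$i\<bar> \<le> C * mu\<^sup>2)))))"
  proof -
  have A: "\<forall>mu x la lu dxN dlN duN i.
        (x, la, lu) \<in> ball (xs, las, lus) \<delta> \<and>
        (\<forall>j. l$j < x$j \<and> x$j < u$j \<and> 0 < la$j \<and> 0 < lu$j) \<and>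
        Fprime H l u x la lu dxN dlN duN = - Fmu g l u (\<sigma> * mu) x la lu \<and>
        dcoef H l u x la lu i \<noteq> 0
        \<longrightarrow> dxS g H l u (\<sigma> * mu) x la lu i - dxN$i =
            (1 / dcoef H l u x la lu i) * (\<Sum>j\<in>UNIV - {i}. H x $ i $ j * dxN$j)"
    using part1 by blast
  show ?thesis
  proof (rule conjI[OF A], intro allI impI)
    fix C1 :: real assume "C1 > 0"
    from part2[OF lu hess_cont feas mult_nonneg compl strict sosc Fp_inv muhat_pos traj_bound sigma this]
    show "\<exists>\<rho>>0. \<exists>mubar. 0 < mubar \<and> mubar \<le> muhat \<and> (\<exists>c C. 0 < c \<and> c \<le> C \<and>
        (\<forall>mu x la lu.
           0 < mu \<and> mu \<le> mubar \<and>
           (x, la, lu) \<in> ball (xs, las, lus) \<delta> \<and>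
           (\<forall>j. l$j < x$j \<and> x$j < u$j \<and> 0 < la$j \<and> 0 < lu$j) \<and>
           norm ((x, la, lu) - traj mu) < \<rho> \<and>
           norm (Fmu g l u mu x la lu) \<le> C1 * mu
           \<longrightarrow>
           (\<forall>i. (xs$i = l$i \<or> xs$i = u$i) \<longrightarrow>
                 0 < 1 / dcoef H l u x la lu i \<and> 1 / dcoef H l u x la lu i \<le> C * mu) \<and>
           (\<forall>i. \<not> (xs$i = l$i \<or> xs$i = u$i) \<longrightarrow>
                 c \<le> 1 / dcoef H l u x la lu i \<and> 1 / dcoef H l u x la lu i \<le> C) \<and>
           (\<forall>dxN dlN duN. Fprime H l u x la lu dxN dlN duN = - Fmu g l u (\<sigma> * mu) x la lu \<longrightarrow>
              (\<forall>i. (xs$i = l$i \<or> xs$i = u$i) \<longrightarrow>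
                 \<bar>dxS g H l u (\<sigma> * mu) x la lu i - dxN$i\<bar> \<le> C * mu\<^sup>2))))" .
  qed
qed

end
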